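(* Let $X$ be a complete CAT(0) space and $T_n:X\to X$ for $n\in\mathbb{N}$, with $F:=\bigcap_{n\in\mathbb{N}}Fix(T_n)\neq\emptyset$. Let $\varphi:[0,\infty)\to[0,\infty)$ be an increasing function vanishing only at $0$, and $(\gamma_n)$ a sequence in $(0,\infty)$ with $\sum_{n=0}^\infty\gamma_n^2=\infty$ having rate of divergence $\theta$. Let $b\in\mathbb{N}$, $p\in F$, and $C$ the closed ball of center $p$ and radius $b$. Assume that for all $n$, $T_n$ is uniformly $(P_2)$ on $C$ with modulus $\gamma_n\varphi$. For $x\in C$ let $x_0:=x$, $x_{n+1}:=T_nx_n$, and suppose the sequence $\left(\frac{d(x_n,x_{n+1})}{\gamma_n}\right)$ is nonincreasing. Then $C\cap F=\{p\}$ and $(x_n)$ converges strongly to $p$ with rate of convergence $$\Psi_{b,\theta,\varphi}(k):=\Sigma_{b,\theta}\left(\left\lceil\frac{2b}{\varphi\left(\frac1{k+1}\right)}\right\rceil\right)+1,\qquad \Sigma_{b,\theta}(k):=\theta(b^2(k+1)^2).$$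
   Context: A geodesic space $(X,d)$ is CAT(0) if for all $z\in X$, all geodesics $\gamma:[a,b]\to X$ and all $t\in[0,1]$, $d^2(z,\gamma((1-t)a+tb))\le(1-t)d^2(z,\gamma(a))+td^2(z,\gamma(b))-t(1-t)d^2(\gamma(a),\gamma(b))$. $T$ is uniformly $(P_2)$ on $C$ with modulus $\phi$ if $T(C)\subseteq C$ and for all $x,y\in C$: $2d^2(Tx,Ty)\le d^2(x,Ty)+d^2(y,Tx)-d^2(x,Tx)-d^2(y,Ty)-2\phi(d(Tx,Ty))$. A rate of divergence for $\sum\gamma_n^2=\infty$ is $\theta:\mathbb{N}\to\mathbb{N}$ with $\sum_{n=0}^{\theta(K)}\gamma_n^2\ge K$ for all $K\in\mathbb{N}$. A rate of convergence of $a_n\to a$ is $\Phi:\mathbb{N}\to\mathbb{N}$ with $d(a_n,a)\le\frac1{k+1}$ for all $k$ and all $n\ge\Phi(k)$. $Fix(T)$ is the fixed point set. *)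

theory Defs
  imports "HOL-Analysis.Analysis"
begin

definition geodesic_on :: "(real \<Rightarrow> 'a::metric_space) \<Rightarrow> real \<Rightarrow> real \<Rightarrow> bool" where
  "geodesic_on g a b \<longleftrightarrow> a \<le> b \<and>
     (\<forall>s\<in>{a..b}. \<forall>t\<in>{a..b}. dist (g s) (g t) = \<bar>s - t\<bar>)"

definition geodesic_space :: "'a::metric_space itself \<Rightarrow> bool" where
  "geodesic_space _ \<longleftrightarrow> (\<forall>x y::'a. \<exists>g. geodesic_on g 0 (dist x y) \<and> g 0 = x \<and> g (dist x y) = y)"

definition CAT0 :: "'a::metric_space itself \<Rightarrow> bool" where
  "CAT0 X \<longleftrightarrow> geodesic_space X \<and>
     (\<forall>(z::'a) g a b (t::real). geodesic_on g a b \<and> 0 \<le> t \<and> t \<le> 1 \<longrightarrow>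
        (dist z (g ((1 - t) * a + t * b)))\<^sup>2 \<le>
          (1 - t) * (dist z (g a))\<^sup>2 + t * (dist z (g b))\<^sup>2 - t * (1 - t) * (dist (g a) (g b))\<^sup>2)"

definition Fix :: "('a \<Rightarrow> 'a) \<Rightarrow> 'a set" where
  "Fix T = {x. T x = x}"

definition uniformly_P2 :: "('a::metric_space \<Rightarrow> 'a) \<Rightarrow> 'a set \<Rightarrow> (real \<Rightarrow> real) \<Rightarrow> bool" where
  "uniformly_P2 T C \<phi> \<longleftrightarrow> T ` C \<subseteq> C \<and>
     (\<forall>x\<in>C. \<forall>y\<in>C. 2 * (dist (T x) (T y))\<^sup>2 \<le>
        (dist x (T y))\<^sup>2 + (dist y (T x))\<^sup>2 - (dist x (T x))\<^sup>2 - (dist y (T y))\<^sup>2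
        - 2 * \<phi> (dist (T x) (T y)))"

definition rate_of_divergence_sq :: "(nat \<Rightarrow> real) \<Rightarrow> (nat \<Rightarrow> nat) \<Rightarrow> bool" where
  "rate_of_divergence_sq \<gamma> \<theta> \<longleftrightarrow> (\<forall>K. (\<Sum>n\<le>\<theta> K. (\<gamma> n)\<^sup>2) \<ge> real K)"

definition Sigma_bt :: "nat \<Rightarrow> (nat \<Rightarrow> nat) \<Rightarrow> nat \<Rightarrow> nat" where
  "Sigma_bt b \<theta> k = \<theta> (b\<^sup>2 * (k + 1)\<^sup>2)"

definition Psi :: "nat \<Rightarrow> (nat \<Rightarrow> nat) \<Rightarrow> (real \<Rightarrow> real) \<Rightarrow> nat \<Rightarrow> nat" where
  "Psi b \<theta> \<phi> k = Sigma_bt b \<theta> (nat \<lceil>2 * real b / \<phi> (1 / (real k + 1))\<rceil>) + 1"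

end

theory Submission
  imports Defs
begin

theorem theorem5p1:
  fixes T :: "nat \<Rightarrow> 'a::complete_space \<Rightarrow> 'a"
    and \<phi> :: "real \<Rightarrow> real" and \<gamma> :: "nat \<Rightarrow> real" and \<theta> :: "nat \<Rightarrow> nat"
    and b :: nat and p x :: 'a and xs :: "nat \<Rightarrow> 'a"
  assumes cat0: "CAT0 TYPE('a)"
    and F_ne: "(\<Inter>n. Fix (T n)) \<noteq> {}"
    and phi_mono: "mono_on {0..} \<phi>"
    and phi_nonneg: "\<forall>t\<ge>0. \<phi> t \<ge> 0"
    and phi_zero: "\<forall>t\<ge>0. \<phi> t = 0 \<longleftrightarrow> t = 0"
    and gamma_pos: "\<forall>n. \<gamma> n > 0"
    and gamma_div: "\<not> summable (\<lambda>n. (\<gamma> n)\<^sup>2)"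
    and theta: "rate_of_divergence_sq \<gamma> \<theta>"
    and pF: "p \<in> (\<Inter>n. Fix (T n))"
    and P2: "\<forall>n. uniformly_P2 (T n) (cball p (real b)) (\<lambda>t. \<gamma> n * \<phi> t)"
    and xC: "x \<in> cball p (real b)"
    and xs0: "xs 0 = x"
    and xsS: "\<forall>n. xs (Suc n) = T n (xs n)"
    and noninc: "\<forall>n. dist (xs (Suc n)) (xs (Suc (Suc n))) / \<gamma> (Suc n)
                      \<le> dist (xs n) (xs (Suc n)) / \<gamma> n"
  shows "cball p (real b) \<inter> (\<Inter>n. Fix (T n)) = {p}
    \<and> xs \<longlonglongrightarrow> p
    \<and> (\<forall>k n. n \<ge> Psi b \<theta> \<phi> k \<longrightarrow> dist (xs n) p \<le> 1 / (real k + 1))"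
proof -
  define C where "C = cball p (real b)"
  define d where "d n = dist (xs n) p" for n
  define s where "s n = dist (xs n) (xs (Suc n))" for n
  have Tp: "T n p = p" for n using pF by (auto simp: Fix_def)
  have TC: "T n ` C \<subseteq> C" for n using P2 by (auto simp: uniformly_P2_def C_def)
  have pC: "p \<in> C" by (simp add: C_def)
  have inC: "xs n \<in> C" for n
  proof (induction n)
    case 0 then show ?case using xC xs0 by (simp add: C_def)
  next
    case (Suc n) then show ?case using TC xsS by auto
  qed
  have dle: "d n \<le> real b" for n using inC[of n] by (simp add: C_def d_def dist_commute)
  have dge: "d n \<ge> 0" for n by (simp add: d_def)
  have phige: "\<phi> (d n) \<ge> 0" for n using phi_nonneg dge by auto
  have key: "(d (Suc n))\<^sup>2 \<le> (d n)\<^sup>2 - (s n)\<^sup>2 - 2 * (\<gamma> n * \<phi> (d (Suc n)))" for n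
  proof -
    have "2 * (dist (T n (xs n)) (T n p))\<^sup>2 \<le>
        (dist (xs n) (T n p))\<^sup>2 + (dist p (T n (xs n)))\<^sup>2 - (dist (xs n) (T n (xs n)))\<^sup>2 - (dist p (T n p))\<^sup>2
        - 2 * (\<gamma> n * \<phi> (dist (T n (xs n)) (T n p)))"
      using P2 inC[of n] pC unfolding uniformly_P2_def C_def by blast
    then show ?thesis using xsS by (simp add: Tp d_def s_def dist_commute)
  qed
  have gp: "\<gamma> n > 0" for n using gamma_pos by auto
  have dmono: "d (Suc n) \<le> d n" for n
  proof -
    have "\<gamma> n * \<phi> (d (Suc n)) \<ge> 0" using phige[of "Suc n"] gp[of n] by simp
    then have "(d (Suc n))\<^sup>2 \<le> (d n)\<^sup>2" using key[of n] zero_le_power2[of "s n"] by linarith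
    then show ?thesis using dge by (meson power2_le_imp_le)
  qed
  have danti: "m \<le> n \<Longrightarrow> d n \<le> d m" for m n
    by (induction n rule: dec_induct) (simp, metis dmono order_trans)
  have tri: "d n \<le> d (Suc n) + s n" for n
    unfolding d_def s_def by (metis dist_triangle dist_commute add.commute)
  have phis: "\<gamma> n * \<phi> (d (Suc n)) \<le> real b * s n" for n
  proof -
    have s0: "s n \<ge> 0" by (simp add: s_def)
    have "(d n)\<^sup>2 - (d (Suc n))\<^sup>2 = (d n - d (Suc n)) * (d n + d (Suc n))"
      by (simp add: power2_eq_square algebra_simps)
    also have "\<dots> \<le> s n * (2 * real b)"
      using tri[of n] dle[of n] dle[of "Suc n"] dge[of n] dge[of "Suc n"] dmono[of n] s0
      by (intro mult_mono) auto
    moreover have "s n * (2 * real b) = 2 * (real b * s n)" by simp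
    ultimately show ?thesis using key[of n] zero_le_power2[of "s n"] by linarith
  qed
  have tele: "(\<Sum>i<m. (s i)\<^sup>2) \<le> (d 0)\<^sup>2 - (d m)\<^sup>2" for m
  proof (induction m)
    case 0 then show ?case by simp
  next
    case (Suc m)
    have "\<gamma> m * \<phi> (d (Suc m)) \<ge> 0" using gp[of m] phige[of "Suc m"] by simp
    then show ?case using Suc key[of m] by simp
  qed
  define a where "a n = s n / \<gamma> n" for n
  have sa: "s n = \<gamma> n * a n" for n using gp[of n] by (simp add: a_def)
  have a0: "a n \<ge> 0" for n using gp[of n] by (simp add: a_def s_def)
  have amono: "a (Suc n) \<le> a n" for n using noninc by (simp add: a_def s_def)
  have aanti: "m \<le> n \<Longrightarrow> a n \<le> a m" for m n
    by (induction n rule: dec_induct) (simp, metis amono order_trans)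
  have rate: "d n \<le> 1 / (real k + 1)" if nP: "n \<ge> Psi b \<theta> \<phi> k" for k n
  proof (cases "b = 0")
    case True
    then have "d n = 0" using dle[of n] dge[of n] by simp
    then show ?thesis by simp
  next
    case False
    then have bpos: "real b > 0" by simp
    define \<epsilon> where "\<epsilon> = \<phi> (1 / (real k + 1))"
    have epos: "\<epsilon> > 0" using phi_zero phi_nonneg unfolding \<epsilon>_def
      by (metis divide_pos_pos less_eq_real_def of_nat_0_le_iff add_nonneg_pos zero_less_one)
    define M where "M = nat \<lceil>2 * real b / \<epsilon>\<rceil>"
    define N where "N = Sigma_bt b \<theta> M"
    have PsiN: "Psi b \<theta> \<phi> k = Suc N" by (simp add: Psi_def N_def M_def \<epsilon>_def)
    have Mge: "real M \<ge> 2 * real b / \<epsilon>" unfolding M_def by linarith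
    have sumg: "(\<Sum>i\<le>N. (\<gamma> i)\<^sup>2) \<ge> (real b)\<^sup>2 * (real M + 1)\<^sup>2"
    proof -
      have "real (b\<^sup>2 * (M + 1)\<^sup>2) \<le> (\<Sum>i\<le>N. (\<gamma> i)\<^sup>2)"
        using theta unfolding rate_of_divergence_sq_def N_def Sigma_bt_def by blast
      then show ?thesis by (simp add: add.commute)
    qed
    have "(a N)\<^sup>2 * (\<Sum>i\<le>N. (\<gamma> i)\<^sup>2) = (\<Sum>i\<le>N. (\<gamma> i)\<^sup>2 * (a N)\<^sup>2)"
      by (simp add: sum_distrib_left mult.commute)
    also have "\<dots> \<le> (\<Sum>i\<le>N. (s i)\<^sup>2)"
    proof (rule sum_mono)
      fix i assume "i \<in> {..N}"
      then have "a N \<le> a i" using aanti by auto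
      then have "(a N)\<^sup>2 \<le> (a i)\<^sup>2" using a0 by (simp add: power_mono)
      then show "(\<gamma> i)\<^sup>2 * (a N)\<^sup>2 \<le> (s i)\<^sup>2"
        by (simp add: sa power_mult_distrib mult_left_mono)
    qed
    also have "\<dots> = (\<Sum>i<Suc N. (s i)\<^sup>2)" by (simp add: lessThan_Suc_atMost)
    also have "\<dots> \<le> (d 0)\<^sup>2" using tele[of "Suc N"] zero_le_power2[of "d (Suc N)"] by linarith
    also have "\<dots> \<le> (real b)\<^sup>2" using dle[of 0] dge[of 0] by (simp add: power_mono)
    finally have A: "(a N)\<^sup>2 * (\<Sum>i\<le>N. (\<gamma> i)\<^sup>2) \<le> (real b)\<^sup>2" .
    have "(a N)\<^sup>2 * ((real b)\<^sup>2 * (real M + 1)\<^sup>2) \<le> (real b)\<^sup>2"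
      using A sumg mult_left_mono[OF sumg zero_le_power2[of "a N"]] by linarith
    then have "(real b)\<^sup>2 * (a N * (real M + 1))\<^sup>2 \<le> (real b)\<^sup>2 * 1\<^sup>2"
      by (simp add: power_mult_distrib mult.commute mult.left_commute)
    then have "(a N * (real M + 1))\<^sup>2 \<le> 1\<^sup>2" using bpos
      by (simp only: mult_le_cancel_left_pos zero_less_power)
    then have aM: "a N * (real M + 1) \<le> 1"
      using a0[of N] by (meson power2_le_imp_le zero_le_one)
    have "\<phi> (d (Suc N)) \<le> real b * a N"
      using phis[of N] gp[of N] by (simp add: sa mult.left_commute)
    also have "\<dots> < \<epsilon>"
    proof -
      have "2 * real b \<le> real M * \<epsilon>" using Mge epos by (simp add: field_simps)
      then have "real b < (real M + 1) * \<epsilon>" using epos bpos by (simp add: algebra_simps)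
      moreover have "real b * a N * (real M + 1) \<le> real b" using aM bpos
        using mult_left_mono[OF aM, of "real b"] by (simp add: mult.assoc)
      ultimately have "real b * a N * (real M + 1) < (real M + 1) * \<epsilon>" by linarith
      then show ?thesis by (simp add: mult.commute)
    qed
    finally have lt: "\<phi> (d (Suc N)) < \<epsilon>" .
    have dN: "d (Suc N) < 1 / (real k + 1)"
    proof (rule ccontr)
      assume "\<not> ?thesis"
      then have "1 / (real k + 1) \<le> d (Suc N)" by simp
      then have "\<epsilon> \<le> \<phi> (d (Suc N))" unfolding \<epsilon>_def
        using phi_mono dge[of "Suc N"] by (auto intro: mono_onD)
      then show False using lt by simp
    qed
    have "d n \<le> d (Suc N)" using danti nP PsiN by simp
    then show ?thesis using dN by simp
  qed
  have uniq: "cball p (real b) \<inter> (\<Inter>n. Fix (T n)) = {p}"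
  proof
    show "{p} \<subseteq> cball p (real b) \<inter> (\<Inter>n. Fix (T n))" using pF by simp
  next
    show "cball p (real b) \<inter> (\<Inter>n. Fix (T n)) \<subseteq> {p}"
    proof
      fix q assume q: "q \<in> cball p (real b) \<inter> (\<Inter>n. Fix (T n))"
      then have Tq: "T 0 q = q" by (auto simp: Fix_def)
      have "2 * (dist (T 0 q) (T 0 p))\<^sup>2 \<le>
        (dist q (T 0 p))\<^sup>2 + (dist p (T 0 q))\<^sup>2 - (dist q (T 0 q))\<^sup>2 - (dist p (T 0 p))\<^sup>2
        - 2 * (\<gamma> 0 * \<phi> (dist (T 0 q) (T 0 p)))"
        using P2 q pC unfolding uniformly_P2_def C_def by blast
      then have "\<gamma> 0 * \<phi> (dist q p) \<le> 0" by (simp add: Tq Tp dist_commute)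
      then have "\<phi> (dist q p) \<le> 0" using gp[of 0] by (simp add: mult_le_0_iff)
      then have "\<phi> (dist q p) = 0" using phi_nonneg by (meson antisym zero_le_dist)
      then have "dist q p = 0" using phi_zero by auto
      then show "q \<in> {p}" by simp
    qed
  qed
  have conv: "xs \<longlonglongrightarrow> p"
  proof (rule metric_LIMSEQ_I)
    fix r :: real assume "r > 0"
    obtain k :: nat where k: "1 / (real k + 1) < r"
      using \<open>r > 0\<close> by (metis nat_approx_posE of_nat_Suc add.commute)
    show "\<exists>no. \<forall>n\<ge>no. dist (xs n) p < r" 
      using rate[of k] k unfolding d_def by (intro exI[of _ "Psi b \<theta> \<phi> k"]) force
  qed
  show ?thesis using uniq conv rate unfolding d_def by blast
qed

end
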